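(* Let $(\mathbf{X}_t)_{t\ge 0}$ be a geometric opinion dynamics (as defined in the context) with $n$ agents in dimension $d$. The following are equivalent: (1) For every starting configuration $\mathbf{X}_0\in(\mathbb{S}^{d-1})^n$, $\Pr_{\mathbf{X}_0}\big(\rho(\mathbf{X}_t,P)\to 0\big)=1$. (2) There exists a constant $c>0$ such that for every starting configuration $\mathbf{X}_0\in(\mathbb{S}^{d-1})^n$, $\Pr_{\mathbf{X}_0}\big(\rho(\mathbf{X}_t,P)\to 0\big)\ge c$.
   Context: Fix integers $n\ge 1$ (number of agents) and $d\ge 1$ (dimension). Let $\mathbb{S}^{d-1}=\{\mathbf{x}\in\mathbb{R}^d:\|\mathbf{x}\|_2=1\}$ and $P_{\mathbb{S}^{d-1}}(\mathbf{x})=\mathbf{x}/\|\mathbf{x}\|_2$ for $\mathbf{x}\neq\mathbf{0}$. A geometric opinion dynamics is the Markov chain $\mathbf{X}_t=(\mathbf{X}_t^{(1)},\ldots,\mathbf{X}_t^{(n)})$ on $(\mathbb{S}^{d-1})^n$ defined by $\mathbf{X}_{t+1}^{(i)}=P_{\mathbb{S}^{d-1}}\big(\mathbf{X}_t^{(i)}+f_i(\mathbf{X}_t^{(1)},\ldots,\mathbf{X}_t^{(n)},\xi_t)\big)$, where $\mathbf{X}_0$ is a given starting configuration, the $\xi_t\in\mathbb{S}^{d-1}$ are drawn i.i.d. over time from a fixed distribution $\mathcal{D}$ independently of everything else, each $f_i:(\mathbb{S}^{d-1})^{n+1}\to\mathbb{R}^d$ is a fixed measurable function, and the unnormalized vector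 $\mathbf{X}_t^{(i)}+f_i(\cdots)$ is assumed to be always nonzero. $\Pr_{\mathbf{X}_0}$ denotes probability for the chain started at $\mathbf{X}_0$. The polarized set is $P=\{(\sigma_1\mathbf{x},\ldots,\sigma_n\mathbf{x}):\mathbf{x}\in\mathbb{S}^{d-1},\ \bm{\sigma}\in\{-1,1\}^n\}$, and $\rho(\mathbf{z},A)=\inf_{\mathbf{y}\in A}\|\mathbf{z}-\mathbf{y}\|_2$ is Euclidean distance in $(\mathbb{R}^d)^n$. *)

theory Defs
  imports "HOL-Probability.Probability"
begin

text \<open>Configurations: n agents (indexed by a finite type 'n) on the unit sphere of
  the Euclidean space 'a (dimension d = DIM('a)).\<close>
definition sph_configs :: "('n \<Rightarrow> 'a::euclidean_space) set" where
  "sph_configs = {x. \<forall>i. x i \<in> sphere 0 1}"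

definition god_step :: "('n \<Rightarrow> ('n \<Rightarrow> 'a::euclidean_space) \<Rightarrow> 'a \<Rightarrow> 'a)
    \<Rightarrow> ('n \<Rightarrow> 'a) \<Rightarrow> 'a \<Rightarrow> ('n \<Rightarrow> 'a)" where
  "god_step f x \<xi> = (\<lambda>i. (x i + f i x \<xi>) /\<^sub>R norm (x i + f i x \<xi>))"

primrec god_traj :: "('n \<Rightarrow> ('n \<Rightarrow> 'a::euclidean_space) \<Rightarrow> 'a \<Rightarrow> 'a)
    \<Rightarrow> ('n \<Rightarrow> 'a) \<Rightarrow> 'a stream \<Rightarrow> nat \<Rightarrow> ('n \<Rightarrow> 'a)" where
  "god_traj f x0 \<omega> 0 = x0"
| "god_traj f x0 \<omega> (Suc t) = god_step f (god_traj f x0 \<omega> t) (\<omega> !! t)"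

definition polarized :: "('n \<Rightarrow> 'a::euclidean_space) set" where
  "polarized = {y. \<exists>x\<in>sphere 0 1. \<exists>\<sigma>::'n \<Rightarrow> real.
       (\<forall>i. \<sigma> i \<in> {-1, 1}) \<and> y = (\<lambda>i. \<sigma> i *\<^sub>R x)}"

definition rho :: "('n::finite \<Rightarrow> 'a::euclidean_space) \<Rightarrow> ('n \<Rightarrow> 'a) set \<Rightarrow> real" where
  "rho z A = (INF y\<in>A. L2_set (\<lambda>i. norm (z i - y i)) UNIV)"

definition polarization_event :: "'a::euclidean_space measure
    \<Rightarrow> ('n::finite \<Rightarrow> ('n \<Rightarrow> 'a) \<Rightarrow> 'a \<Rightarrow> 'a) \<Rightarrow> ('n \<Rightarrow> 'a) \<Rightarrow> 'a stream set" where
  "polarization_event D f x0 =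
     {\<omega> \<in> space (stream_space D). (\<lambda>t. rho (god_traj f x0 \<omega> t) polarized) \<longlonglongrightarrow> 0}"

end

theory Submission imports Defs begin

lemma rho_lip:
  fixes z w :: "'n::finite \<Rightarrow> 'a::euclidean_space"
  assumes "P \<noteq> {}"
  shows "rho z P \<le> rho w P + L2_set (\<lambda>i. norm (z i - w i)) UNIV"
proof -
  have bdd: "bdd_below ((\<lambda>y. L2_set (\<lambda>i. norm (v i - y i)) UNIV) ` P)" for v :: "'n \<Rightarrow> 'a"
    by (rule bdd_belowI[of _ 0]) (auto simp: L2_set_nonneg)
  have "rho z P - L2_set (\<lambda>i. norm (z i - w i)) UNIV \<le> L2_set (\<lambda>i. norm (w i - y i)) UNIV"
    if "y \<in> P" for y
  proof -
    have "rho z P \<le> L2_set (\<lambda>i. norm (z i - y i)) UNIV"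
      unfolding rho_def by (rule cINF_lower[OF bdd that])
    also have "\<dots> \<le> L2_set (\<lambda>i. norm (z i - w i) + norm (w i - y i)) UNIV"
      by (rule L2_set_mono) (auto intro: norm_triangle_sub[of "z _ - y _" "w _", simplified] order_trans[OF _ norm_triangle_ineq])
    also have "\<dots> \<le> L2_set (\<lambda>i. norm (z i - w i)) UNIV + L2_set (\<lambda>i. norm (w i - y i)) UNIV"
      by (rule L2_set_triangle_ineq)
    finally show ?thesis by simp
  qed
  then have "rho z P - L2_set (\<lambda>i. norm (z i - w i)) UNIV \<le> rho w P"
    unfolding rho_def[of w] using assms by (intro cINF_greatest) auto
  then show ?thesis by simp
qed

lemma polarized_ne: "(polarized :: ('n \<Rightarrow> 'a::euclidean_space) set) \<noteq> {}"
proof -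
  obtain b :: 'a where b: "b \<in> Basis" using nonempty_Basis by blast
  then have "norm b = 1" by simp
  then have "(\<lambda>i::'n. (1::real) *\<^sub>R b) \<in> polarized"
    unfolding polarized_def by (intro CollectI bexI[of _ b] exI[of _ "\<lambda>_. 1"]) auto
  then show ?thesis by blast
qed

lemma rho_cont: "continuous_on UNIV (\<lambda>z::'n::finite \<Rightarrow> 'a::euclidean_space. rho z polarized)"
proof (rule continuous_at_imp_continuous_on, intro ballI)
  fix z :: "'n \<Rightarrow> 'a"
  let ?g = "\<lambda>w::'n \<Rightarrow> 'a. \<Sum>i\<in>UNIV. norm (w i - z i)"
  have gc: "continuous_on UNIV ?g"
    by (intro continuous_intros continuous_on_product_coordinates)
  have "isCont ?g z"
    using gc by (simp add: continuous_on_eq_continuous_at)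
  then have "(?g \<longlongrightarrow> ?g z) (at z)"
    unfolding isCont_def .
  moreover have "?g z = 0" by simp
  ultimately have g0: "(?g \<longlongrightarrow> 0) (at z)" by metis
  have le: "norm (rho w polarized - rho z polarized) \<le> ?g w" for w
  proof -
    have "L2_set (\<lambda>i. norm (w i - z i)) UNIV \<le> ?g w"
      by (rule L2_set_le_sum) auto
    moreover have "L2_set (\<lambda>i. norm (z i - w i)) UNIV = L2_set (\<lambda>i. norm (w i - z i)) UNIV"
      by (simp add: norm_minus_commute)
    ultimately show ?thesis
      using rho_lip[OF polarized_ne, of w z] rho_lip[OF polarized_ne, of z w] by auto
  qed
  have "((\<lambda>w. rho w polarized - rho z polarized) \<longlongrightarrow> 0) (at z)"
    by (rule Lim_null_comparison[OF always_eventually g0]) (use le in auto)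
  then show "isCont (\<lambda>z. rho z polarized) z"
    unfolding isCont_def by (simp add: LIM_zero_iff)
qed


lemma traj_Suc_shift:
  "god_traj f x0 \<omega> (Suc t) = god_traj f (god_step f x0 (shd \<omega>)) (stl \<omega>) t"
  by (induction t) simp_all

lemma traj_Suc_cons:
  "god_traj f x0 (s ## \<omega>) (Suc t) = god_traj f (god_step f x0 s) \<omega> t"
  by (simp add: traj_Suc_shift del: god_traj.simps)

definition dep :: "'a set \<Rightarrow> nat \<Rightarrow> 'a stream set \<Rightarrow> bool" where
  "dep A T C \<longleftrightarrow> (\<forall>\<omega>\<in>streams A. \<forall>\<omega>'\<in>streams A. stake T \<omega> = stake T \<omega>' \<longrightarrow> (\<omega> \<in> C \<longleftrightarrow> \<omega>' \<in> C))"

lemma dep_mono: "dep A T C \<Longrightarrow> T \<le> T' \<Longrightarrow> dep A T' C"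
  unfolding dep_def
proof (intro ballI impI)
  fix \<omega> \<omega>' assume H: "\<forall>\<omega>\<in>streams A. \<forall>\<omega>'\<in>streams A. stake T \<omega> = stake T \<omega>' \<longrightarrow> (\<omega> \<in> C) = (\<omega>' \<in> C)"
    and T: "T \<le> T'" and w: "\<omega> \<in> streams A" "\<omega>' \<in> streams A" and eq: "stake T' \<omega> = stake T' \<omega>'"
  have "stake T \<omega> = take T (stake T' \<omega>)" "stake T \<omega>' = take T (stake T' \<omega>')"
    using T by (simp_all add: take_stake min_def)
  then have "stake T \<omega> = stake T \<omega>'" using eq by simp
  then show "(\<omega> \<in> C) = (\<omega>' \<in> C)" using H w by blast
qed

lemma dep_UN: "(\<And>i. i \<in> I \<Longrightarrow> dep A T (C i)) \<Longrightarrow> dep A T (\<Union>i\<in>I. C i)"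
  unfolding dep_def by blast

lemma approx_sets:
  assumes M: "prob_space M" and B: "B \<in> sets (stream_space M)"
  shows "\<forall>e>0. \<exists>T C. C \<in> sets (stream_space M) \<and> dep (space M) T C \<and>
           measure (stream_space M) ((B - C) \<union> (C - B)) < e"
proof -
  interpret M: prob_space M by (rule M)
  interpret S: prob_space "stream_space M" by (rule M.prob_space_stream_space)
  let ?S = "stream_space M"
  let ?\<Omega> = "streams (space M)"
  define G where "G = {{\<omega>\<in>?\<Omega>. \<omega> !! i \<in> A} | i A. A \<in> sets M}"
  have GP: "G \<subseteq> Pow ?\<Omega>" unfolding G_def by auto
  have G_sets: "G \<subseteq> sets ?S"
  proof
    fix g assume "g \<in> G"
    then obtain i A where g: "g = {\<omega>\<in>?\<Omega>. \<omega> !! i \<in> A}" and A: "A \<in> sets M" unfolding G_def by blast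
    have "g = (\<lambda>\<omega>. \<omega> !! i) -` A \<inter> space ?S" unfolding g by (auto simp: space_stream_space)
    then show "g \<in> sets ?S" using measurable_sets[OF measurable_snth A] by simp
  qed
  have "sets ?S \<subseteq> sets (sigma ?\<Omega> G)"
  proof (rule sets_stream_space_in_sets)
    show "space (sigma ?\<Omega> G) = ?\<Omega>" using GP by simp
    fix i
    show "(\<lambda>x. x !! i) \<in> measurable (sigma ?\<Omega> G) M"
    proof (rule measurableI)
      fix x assume "x \<in> space (sigma ?\<Omega> G)"
      then show "x !! i \<in> space M" using GP by (simp add: streams_iff_snth)
    next
      fix A assume A: "A \<in> sets M"
      have "(\<lambda>x. x !! i) -` A \<inter> space (sigma ?\<Omega> G) \<in> G"
        using GP A unfolding G_def by auto
      then show "(\<lambda>x. x !! i) -` A \<inter> space (sigma ?\<Omega> G) \<in> sets (sigma ?\<Omega> G)"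
        using GP by auto
    qed
  qed
  moreover have "sets (sigma ?\<Omega> G) = sigma_sets ?\<Omega> G" using GP by (rule sets_measure_of)
  ultimately have "B \<in> sigma_sets ?\<Omega> G" using B by blast
  then show ?thesis
  proof (induction rule: sigma_sets.induct)
    case (Basic a)
    then obtain i A where a: "a = {\<omega>\<in>?\<Omega>. \<omega> !! i \<in> A}" unfolding G_def by blast
    have "dep (space M) (Suc i) a"
      unfolding dep_def a
    proof (intro ballI impI)
      fix \<omega> \<omega>' :: "'a stream" assume eq: "stake (Suc i) \<omega> = stake (Suc i) \<omega>'"
      have "\<omega> !! i = \<omega>' !! i"
        using stake_nth[of i "Suc i" \<omega>] stake_nth[of i "Suc i" \<omega>'] eq by simp
      moreover assume "\<omega> \<in> ?\<Omega>" "\<omega>' \<in> ?\<Omega>"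
      ultimately show "(\<omega> \<in> {\<omega> \<in> ?\<Omega>. \<omega> !! i \<in> A}) = (\<omega>' \<in> {\<omega> \<in> ?\<Omega>. \<omega> !! i \<in> A})"
        by simp
    qed
    then show ?case using Basic G_sets by (intro allI impI exI[of _ "Suc i"] exI[of _ a]) auto
  next
    case Empty
    show ?case by (intro allI impI exI[of _ 0] exI[of _ "{}"]) (auto simp: dep_def)
  next
    case (Compl a)
    show ?case
    proof (intro allI impI)
      fix e :: real assume "e > 0"
      with Compl.IH obtain T C where C: "C \<in> sets ?S" "dep (space M) T C"
        "measure ?S ((a - C) \<union> (C - a)) < e" by blast
      have sub: "C \<subseteq> ?\<Omega>" using sets.sets_into_space[OF C(1)] by (simp add: space_stream_space)
      have "a \<subseteq> ?\<Omega>" using sigma_sets_into_sp[OF GP Compl.hyps] .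
      then have eq: "((?\<Omega> - a) - (?\<Omega> - C)) \<union> ((?\<Omega> - C) - (?\<Omega> - a)) = (a - C) \<union> (C - a)"
        using sub by blast
      have "?\<Omega> - C \<in> sets ?S" using C(1) by (metis sets.compl_sets space_stream_space)
      moreover have "dep (space M) T (?\<Omega> - C)" using C(2) unfolding dep_def by blast
      ultimately show "\<exists>T C. C \<in> sets ?S \<and> dep (space M) T C \<and>
           measure ?S (((?\<Omega> - a) - C) \<union> (C - (?\<Omega> - a))) < e"
        using C(3) eq by (intro exI[of _ T] exI[of _ "?\<Omega> - C"]) auto
    qed
  next
    case (Union a)
    have a_sets: "a i \<in> sets ?S" for i
      using sets.sigma_sets_subset[OF G_sets] Union.hyps by (auto simp: space_stream_space)
    let ?U = "\<Union>i. a i"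
    have U_sets: "?U \<in> sets ?S" using a_sets by auto
    define A where "A N = (\<Union>i<N. a i)" for N
    have A_sets: "A N \<in> sets ?S" for N unfolding A_def using a_sets by auto
    have "incseq A" unfolding A_def incseq_def by (intro allI impI UN_mono) auto
    moreover have "(\<Union>N. A N) = ?U" unfolding A_def by auto
    ultimately have lim: "(\<lambda>N. measure ?S (A N)) \<longlonglongrightarrow> measure ?S ?U"
      using S.finite_Lim_measure_incseq[of A] A_sets by auto
    show ?case
    proof (intro allI impI)
      fix e :: real assume e: "e > 0"
      obtain N where N: "norm (measure ?S (A N) - measure ?S ?U) < e / 2"
      proof -
        from lim e obtain no where "\<forall>n\<ge>no. norm (measure ?S (A n) - measure ?S ?U) < e / 2"
          unfolding LIMSEQ_iff by (meson half_gt_zero)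
        then show ?thesis using that by blast
      qed
      have "\<forall>i. \<exists>T C. C \<in> sets ?S \<and> dep (space M) T C \<and>
           measure ?S ((a i - C) \<union> (C - a i)) < e / (2 * Suc N)"
        using Union.IH e by auto
      then have "\<exists>Tf. \<forall>i. \<exists>C. C \<in> sets ?S \<and> dep (space M) (Tf i) C \<and>
           measure ?S ((a i - C) \<union> (C - a i)) < e / (2 * Suc N)"
        by (rule choice)
      then obtain Tf where "\<forall>i. \<exists>C. C \<in> sets ?S \<and> dep (space M) (Tf i) C \<and>
           measure ?S ((a i - C) \<union> (C - a i)) < e / (2 * Suc N)" by blast
      then have "\<exists>Cf. \<forall>i. Cf i \<in> sets ?S \<and> dep (space M) (Tf i) (Cf i) \<and>
           measure ?S ((a i - Cf i) \<union> (Cf i - a i)) < e / (2 * Suc N)"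
        by (rule choice)
      then obtain Cf where TCall: "\<forall>i. Cf i \<in> sets ?S \<and> dep (space M) (Tf i) (Cf i) \<and>
           measure ?S ((a i - Cf i) \<union> (Cf i - a i)) < e / (2 * Suc N)" by blast
      have TC: "\<And>i. Cf i \<in> sets ?S" "\<And>i. dep (space M) (Tf i) (Cf i)"
        "\<And>i. measure ?S ((a i - Cf i) \<union> (Cf i - a i)) < e / (2 * Suc N)"
        using TCall by blast+
      define C where "C = (\<Union>i<N. Cf i)"
      define T where "T = (\<Sum>i<N. Tf i)"
      have C_sets: "C \<in> sets ?S" unfolding C_def using TC(1) by auto
      have "dep (space M) T C"
        unfolding C_def
      proof (rule dep_UN)
        fix i assume "i \<in> {..<N}"
        then have "Tf i \<le> T" unfolding T_def by (intro member_le_sum) auto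
        then show "dep (space M) T (Cf i)" using dep_mono TC(2) by blast
      qed
      moreover have "measure ?S ((?U - C) \<union> (C - ?U)) < e"
      proof -
        have subs: "(?U - C) \<union> (C - ?U) \<subseteq> (?U - A N) \<union> (\<Union>i<N. (a i - Cf i) \<union> (Cf i - a i))"
        proof
          fix x assume x: "x \<in> (?U - C) \<union> (C - ?U)"
          show "x \<in> (?U - A N) \<union> (\<Union>i<N. (a i - Cf i) \<union> (Cf i - a i))"
          proof (cases "x \<in> ?U")
            case True
            with x have "x \<notin> C" by blast
            show ?thesis
            proof (cases "x \<in> A N")
              case True
              then obtain i where "i < N" "x \<in> a i" unfolding A_def by blast
              with \<open>x \<notin> C\<close> have "x \<in> a i - Cf i" unfolding C_def by blast
              with \<open>i < N\<close> show ?thesis by blast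
            next
              case False with \<open>x \<in> ?U\<close> show ?thesis by blast
            qed
          next
            case False
            with x have "x \<in> C" by blast
            then obtain i where "i < N" "x \<in> Cf i" unfolding C_def by blast
            with False have "x \<in> Cf i - a i" by blast
            with \<open>i < N\<close> show ?thesis by blast
          qed
        qed
        have s1: "?U - A N \<in> sets ?S" using U_sets A_sets by auto
        have s2: "(\<Union>i<N. (a i - Cf i) \<union> (Cf i - a i)) \<in> sets ?S" using a_sets TC(1) by auto
        have m0: "measure ?S ((?U - C) \<union> (C - ?U)) \<le> measure ?S ((?U - A N) \<union> (\<Union>i<N. (a i - Cf i) \<union> (Cf i - a i)))"
          using subs s1 s2 by (intro S.finite_measure_mono) auto
        have m1: "measure ?S ((?U - A N) \<union> (\<Union>i<N. (a i - Cf i) \<union> (Cf i - a i))) \<le> measure ?S (?U - A N) + measure ?S (\<Union>i<N. (a i - Cf i) \<union> (Cf i - a i))"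
          using s1 s2 by (rule measure_Un_le)
        have m2: "measure ?S (?U - A N) = measure ?S ?U - measure ?S (A N)"
          using U_sets A_sets by (intro S.finite_measure_Diff) (auto simp: A_def)
        have "measure ?S (\<Union>i<N. (a i - Cf i) \<union> (Cf i - a i)) \<le> (\<Sum>i<N. measure ?S ((a i - Cf i) \<union> (Cf i - a i)))"
          using a_sets TC(1) by (intro S.finite_measure_subadditive_finite) auto
        also have "\<dots> \<le> (\<Sum>i<N. e / (2 * Suc N))"
          using TC(3) by (intro sum_mono) (simp add: less_imp_le)
        also have "\<dots> = N * (e / (2 * Suc N))" by simp
        also have "\<dots> \<le> e / 2"
          using e by (simp add: field_simps)
        finally have m3: "measure ?S (\<Union>i<N. (a i - Cf i) \<union> (Cf i - a i)) \<le> e / 2" .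
        have "measure ?S ?U - measure ?S (A N) < e / 2"
          using N by (simp only: real_norm_def)
        then show ?thesis using m0 m1 m2 m3 by linarith
      qed
      ultimately show "\<exists>T C. C \<in> sets ?S \<and> dep (space M) T C \<and> measure ?S ((?U - C) \<union> (C - ?U)) < e"
        using C_sets by blast
    qed
  qed
qed

context
  fixes f :: "'n::finite \<Rightarrow> ('n \<Rightarrow> 'a::euclidean_space) \<Rightarrow> 'a \<Rightarrow> 'a"
    and D :: "'a measure"
  assumes D_prob: "prob_space D"
    and D_space: "space D = sphere 0 1"
    and D_sets: "sets D = sets (restrict_space borel (sphere 0 1))"
    and f_meas: "\<And>i. (\<lambda>(x, \<xi>). f i x \<xi>)
                   \<in> borel_measurable (restrict_space borel (sph_configs \<times> sphere 0 1))"
    and nonzero: "\<And>x \<xi> i. x \<in> sph_configs \<Longrightarrow> \<xi> \<in> sphere 0 1 \<Longrightarrow> x i + f i x \<xi> \<noteq> 0"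
begin

lemma step_configs: "x \<in> sph_configs \<Longrightarrow> \<xi> \<in> sphere 0 1 \<Longrightarrow> god_step f x \<xi> \<in> sph_configs"
  using nonzero by (auto simp: god_step_def sph_configs_def)

lemma traj_configs:
  "x0 \<in> sph_configs \<Longrightarrow> \<omega> \<in> streams (sphere 0 1) \<Longrightarrow> god_traj f x0 \<omega> t \<in> sph_configs"
  by (induction t) (auto intro!: step_configs simp: streams_iff_snth)

lemma D_borel: "(\<lambda>x. x) \<in> measurable D borel"
  using measurable_cong_sets[OF D_sets refl, of borel] measurable_restrict_space1[OF measurable_ident_sets[OF refl]]
  by auto

lemma traj_meas:
  assumes x0: "x0 \<in> sph_configs"
  shows "(\<lambda>\<omega>. god_traj f x0 \<omega> t) \<in> borel_measurable (stream_space D)"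
proof (induction t)
  case 0
  then show ?case by simp
next
  case (Suc t)
  let ?X = "\<lambda>\<omega>. god_traj f x0 \<omega> t"
  have sn: "(\<lambda>\<omega>. \<omega> !! t) \<in> borel_measurable (stream_space D)"
    using measurable_compose[OF measurable_snth D_borel] by simp
  have pm: "(\<lambda>\<omega>. (?X \<omega>, \<omega> !! t)) \<in> measurable (stream_space D) (restrict_space borel (sph_configs \<times> sphere 0 1))"
  proof (rule measurable_restrict_space2)
    show "(\<lambda>\<omega>. (?X \<omega>, \<omega> !! t)) \<in> space (stream_space D) \<rightarrow> sph_configs \<times> sphere 0 1"
      using traj_configs[OF x0] by (auto simp: space_stream_space D_space streams_iff_snth)
    show "(\<lambda>\<omega>. (?X \<omega>, \<omega> !! t)) \<in> measurable (stream_space D) borel"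
      unfolding borel_prod[symmetric] using Suc sn by measurable
  qed
  have fi: "(\<lambda>\<omega>. f i (?X \<omega>) (\<omega> !! t)) \<in> borel_measurable (stream_space D)" for i
    using measurable_compose[OF pm f_meas[of i]] by simp
  show ?case
  proof (rule measurable_coordinatewise_then_product)
    fix i
    have xi: "(\<lambda>\<omega>. ?X \<omega> i) \<in> borel_measurable (stream_space D)"
      using measurable_compose[OF Suc borel_measurable_continuous_onI[OF continuous_on_product_coordinates]] by simp
    show "(\<lambda>\<omega>. god_traj f x0 \<omega> (Suc t) i) \<in> borel_measurable (stream_space D)"
      using xi fi[of i] by (simp add: god_step_def) measurable
  qed
qed

lemma E_sets:
  assumes x0: "x0 \<in> sph_configs"
  shows "polarization_event D f x0 \<in> sets (stream_space D)"
proof -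
  have r: "(\<lambda>\<omega>. rho (god_traj f x0 \<omega> t) polarized) \<in> borel_measurable (stream_space D)" for t
    using measurable_compose[OF traj_meas[OF x0] borel_measurable_continuous_onI[OF rho_cont]] by simp
  have eq: "polarization_event D f x0 = {\<omega> \<in> space (stream_space D). \<forall>m::nat. \<exists>N::nat. \<forall>n\<ge>N.
      \<bar>rho (god_traj f x0 \<omega> n) polarized\<bar> < 1 / Suc m}"
  proof -
    have "(\<lambda>t. r t) \<longlonglongrightarrow> 0 \<longleftrightarrow> (\<forall>m::nat. \<exists>N::nat. \<forall>n\<ge>N. \<bar>r n\<bar> < 1 / Suc m)" for r :: "nat \<Rightarrow> real"
    proof
      assume "r \<longlonglongrightarrow> 0"
      then show "\<forall>m::nat. \<exists>N::nat. \<forall>n\<ge>N. \<bar>r n\<bar> < 1 / Suc m"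
        unfolding LIMSEQ_iff by auto
    next
      assume H: "\<forall>m::nat. \<exists>N::nat. \<forall>n\<ge>N. \<bar>r n\<bar> < 1 / Suc m"
      show "r \<longlonglongrightarrow> 0"
        unfolding LIMSEQ_iff
      proof (intro allI impI)
        fix e :: real assume "0 < e"
        then obtain m :: nat where "1 / Suc m < e"
          using nat_approx_posE by blast
        moreover obtain N where "\<forall>n\<ge>N. \<bar>r n\<bar> < 1 / Suc m" using H by blast
        ultimately have "\<forall>n\<ge>N. norm (r n - 0) < e" by force
        then show "\<exists>N. \<forall>n\<ge>N. norm (r n - 0) < e" by blast
      qed
    qed
    then show ?thesis unfolding polarization_event_def by simp
  qed
  show ?thesis unfolding eq using r by measurable
qed

lemma E_cons:
  assumes "s \<in> sphere 0 1"
  shows "(s ## \<omega> \<in> polarization_event D f x0) \<longleftrightarrow> (\<omega> \<in> polarization_event D f (god_step f x0 s))"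
proof -
  have "(\<lambda>t. rho (god_traj f x0 (s ## \<omega>) t) polarized) \<longlonglongrightarrow> 0 \<longleftrightarrow>
        (\<lambda>t. rho (god_traj f x0 (s ## \<omega>) (Suc t)) polarized) \<longlonglongrightarrow> 0"
    by (rule filterlim_sequentially_Suc[symmetric])
  then show ?thesis
    using assms unfolding polarization_event_def traj_Suc_cons
    by (simp add: space_stream_space D_space streams_Stream)
qed


lemma markov:
  assumes q: "\<And>x. x \<in> sph_configs \<Longrightarrow> emeasure (stream_space D) (space (stream_space D) - polarization_event D f x) \<le> q"
  shows "x0 \<in> sph_configs \<Longrightarrow> C \<in> sets (stream_space D) \<Longrightarrow> dep (sphere 0 1) T C \<Longrightarrow>
    emeasure (stream_space D) ((space (stream_space D) - polarization_event D f x0) \<inter> C) \<le> q * emeasure (stream_space D) C"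
proof (induction T arbitrary: x0 C)
  case 0
  interpret D: prob_space D by (rule D_prob)
  interpret S: prob_space "stream_space D" by (rule D.prob_space_stream_space)
  have sub: "C \<subseteq> streams (sphere 0 1)"
    using sets.sets_into_space[OF "0.prems"(2)] by (simp add: space_stream_space D_space)
  show ?case
  proof (cases "C = {}")
    case True then show ?thesis by simp
  next
    case False
    then obtain \<omega> where "\<omega> \<in> C" by blast
    with "0.prems"(3) sub have "C = space (stream_space D)"
      unfolding dep_def by (auto simp: space_stream_space D_space)
    moreover have "(space (stream_space D) - polarization_event D f x0) \<inter> space (stream_space D)
       = space (stream_space D) - polarization_event D f x0" by blast
    ultimately show ?thesis using q[OF "0.prems"(1)] S.emeasure_space_1 by simp
  qed
next
  case (Suc T)
  interpret D: prob_space D by (rule D_prob)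
  interpret S: prob_space "stream_space D" by (rule D.prob_space_stream_space)
  let ?S = "stream_space D"
  let ?E = "\<lambda>x. polarization_event D f x"
  let ?X = "(space ?S - ?E x0) \<inter> C"
  note Esets = E_sets
  have Cs[measurable]: "C \<in> sets ?S" by (rule Suc.prems(2))
  have X: "?X \<in> sets ?S" using Esets[OF Suc.prems(1)] Cs by auto
  define Ct where "Ct t = {x\<in>space ?S. t ## x \<in> C}" for t
  have Ct_sets: "Ct t \<in> sets ?S" if t: "t \<in> space D" for t
  proof -
    have "(\<lambda>x. t ## x) \<in> measurable ?S ?S" using t by measurable
    from measurable_sets[OF this Cs] show ?thesis unfolding Ct_def by (simp add: vimage_def Int_def conj_commute)
  qed
  have Ct_dep: "dep (sphere 0 1) T (Ct t)" if t: "t \<in> space D" for t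
    using Suc.prems(3) t unfolding dep_def Ct_def
    by (auto simp: space_stream_space D_space streams_Stream)
  have slice: "{x\<in>space ?S. t ## x \<in> ?X} = (space ?S - ?E (god_step f x0 t)) \<inter> Ct t"
    if t: "t \<in> space D" for t
    using t E_cons[of t _ x0]
    by (auto simp: Ct_def space_stream_space D_space streams_Stream)
  have "emeasure ?S ?X = (\<integral>\<^sup>+t. emeasure ?S {x\<in>space ?S. t ## x \<in> ?X} \<partial>D)"
    by (rule D.emeasure_stream_space[OF X])
  also have "\<dots> \<le> (\<integral>\<^sup>+t. q * emeasure ?S (Ct t) \<partial>D)"
  proof (rule nn_integral_mono)
    fix t assume t: "t \<in> space D"
    have "god_step f x0 t \<in> sph_configs"
      using step_configs[OF Suc.prems(1)] t D_space by auto
    then show "emeasure ?S {x\<in>space ?S. t ## x \<in> ?X} \<le> q * emeasure ?S (Ct t)"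
      unfolding slice[OF t] by (rule Suc.IH[OF _ Ct_sets[OF t] Ct_dep[OF t]])
  qed
  also have "\<dots> = q * (\<integral>\<^sup>+t. emeasure ?S (Ct t) \<partial>D)"
  proof (rule nn_integral_cmult)
    have "(\<lambda>t. \<integral>\<^sup>+x. indicator C (t ## x) \<partial>?S) \<in> borel_measurable D"
      by measurable
    moreover have "t \<in> space D \<Longrightarrow> (\<integral>\<^sup>+x. indicator C (t ## x) \<partial>?S) = emeasure ?S (Ct t)" for t
    proof -
      assume t: "t \<in> space D"
      have "(\<integral>\<^sup>+x. indicator C (t ## x) \<partial>?S) = (\<integral>\<^sup>+x. indicator (Ct t) x \<partial>?S)"
        by (rule nn_integral_cong) (auto simp: Ct_def indicator_def)
      also have "\<dots> = emeasure ?S (Ct t)"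
        using Ct_sets[OF t] by simp
      finally show ?thesis .
    qed
    ultimately show "(\<lambda>t. emeasure ?S (Ct t)) \<in> borel_measurable D"
      using measurable_cong by (smt (verit))
  qed
  also have "(\<integral>\<^sup>+t. emeasure ?S (Ct t) \<partial>D) = emeasure ?S C"
    unfolding Ct_def by (rule D.emeasure_stream_space[OF Cs, symmetric])
  finally show ?case .
qed

end


theorem theorem3p1:
  fixes f :: "'n::finite \<Rightarrow> ('n \<Rightarrow> 'a::euclidean_space) \<Rightarrow> 'a \<Rightarrow> 'a"
    and D :: "'a measure"
  assumes D_prob: "prob_space D"
    and D_space: "space D = sphere 0 1"
    and D_sets: "sets D = sets (restrict_space borel (sphere 0 1))"
    and f_meas: "\<And>i. (\<lambda>(x, \<xi>). f i x \<xi>)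
                   \<in> borel_measurable (restrict_space borel (sph_configs \<times> sphere 0 1))"
    and nonzero: "\<And>x \<xi> i. x \<in> sph_configs \<Longrightarrow> \<xi> \<in> sphere 0 1 \<Longrightarrow> x i + f i x \<xi> \<noteq> 0"
  shows "(\<forall>x0\<in>sph_configs. measure (stream_space D) (polarization_event D f x0) = 1)
     \<longleftrightarrow> (\<exists>c>0. \<forall>x0\<in>sph_configs. measure (stream_space D) (polarization_event D f x0) \<ge> c)"
proof
  assume "\<forall>x0\<in>sph_configs. measure (stream_space D) (polarization_event D f x0) = 1"
  then show "\<exists>c>0. \<forall>x0\<in>sph_configs. measure (stream_space D) (polarization_event D f x0) \<ge> c"
    by (intro exI[of _ 1]) auto
next
  assume "\<exists>c>0. \<forall>x0\<in>sph_configs. measure (stream_space D) (polarization_event D f x0) \<ge> c"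
  then obtain c where c: "c > 0" and H: "\<And>x. x \<in> sph_configs \<Longrightarrow> measure (stream_space D) (polarization_event D f x) \<ge> c"
    by blast
  interpret D: prob_space D by (rule D_prob)
  interpret S: prob_space "stream_space D" by (rule D.prob_space_stream_space)
  let ?S = "stream_space D"
  let ?E = "\<lambda>x. polarization_event D f x"
  have Es: "?E x \<in> sets ?S" if "x \<in> sph_configs" for x :: "'n \<Rightarrow> 'a"
    by (rule E_sets[OF D_prob D_space D_sets f_meas]) (use nonzero that in auto)
  show "\<forall>x0\<in>sph_configs. measure ?S (?E x0) = 1"
  proof
    fix x0 :: "'n \<Rightarrow> 'a" assume x0: "x0 \<in> sph_configs"
    have c1: "c \<le> 1" using H[OF x0] S.prob_le_1[of "?E x0"] by linarith
    define q where "q = 1 - c"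
    have q0: "0 \<le> q" using c1 unfolding q_def by simp
    have qx: "emeasure ?S (space ?S - ?E x) \<le> ennreal q" if x: "x \<in> sph_configs" for x :: "'n \<Rightarrow> 'a"
    proof -
      have "measure ?S (space ?S - ?E x) = 1 - measure ?S (?E x)"
        using Es[OF x] by (rule S.prob_compl)
      also have "\<dots> \<le> q" using H[OF x] unfolding q_def by simp
      finally show ?thesis by (simp add: S.emeasure_eq_measure ennreal_leI)
    qed
    let ?B = "space ?S - ?E x0"
    have Bs: "?B \<in> sets ?S" using Es[OF x0] by auto
    have mk: "measure ?S (?B \<inter> C) \<le> q * measure ?S C" if C: "C \<in> sets ?S" "dep (sphere 0 1) T C" for C T
    proof -
      have "emeasure ?S (?B \<inter> C) \<le> ennreal q * emeasure ?S C"
        by (rule markov[where q="ennreal q"]) (use D_prob D_space D_sets f_meas nonzero qx x0 C in auto)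
      then have "ennreal (measure ?S (?B \<inter> C)) \<le> ennreal (q * measure ?S C)"
        by (simp add: S.emeasure_eq_measure ennreal_mult q0)
      then show ?thesis using q0 by (simp add: ennreal_le_iff)
    qed
    have key: "c * measure ?S ?B \<le> 2 * e" if e: "e > 0" for e
    proof -
      obtain T C where C: "C \<in> sets ?S" "dep (space D) T C" and sd: "measure ?S ((?B - C) \<union> (C - ?B)) < e"
        using approx_sets[OF D_prob Bs] e by blast
      have s1: "?B - C \<in> sets ?S" "C - ?B \<in> sets ?S" "?B \<inter> C \<in> sets ?S" using C Bs by auto
      have a1: "measure ?S (?B - C) < e"
        using sd S.finite_measure_mono[of "?B - C" "(?B - C) \<union> (C - ?B)"] s1 by auto
      have a2: "measure ?S (C - ?B) < e"
        using sd S.finite_measure_mono[of "C - ?B" "(?B - C) \<union> (C - ?B)"] s1 by auto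
      have "measure ?S ?B \<le> measure ?S ((?B \<inter> C) \<union> (?B - C))"
        by (rule S.finite_measure_mono) (use s1 in auto)
      also have "\<dots> \<le> measure ?S (?B \<inter> C) + measure ?S (?B - C)"
        using s1 by (intro measure_Un_le) auto
      finally have b1: "measure ?S ?B \<le> measure ?S (?B \<inter> C) + measure ?S (?B - C)" .
      have "measure ?S C \<le> measure ?S (?B \<union> (C - ?B))"
        by (rule S.finite_measure_mono) (use s1 Bs C in auto)
      also have "\<dots> \<le> measure ?S ?B + measure ?S (C - ?B)"
        using s1 Bs by (intro measure_Un_le) auto
      finally have b2: "measure ?S C \<le> measure ?S ?B + measure ?S (C - ?B)" .
      have b3: "measure ?S (?B \<inter> C) \<le> q * measure ?S C" using mk C D_space by simp
      have "q * measure ?S C \<le> q * (measure ?S ?B + e)"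
        using b2 a2 q0 by (intro mult_left_mono) auto
      then have "measure ?S ?B \<le> q * (measure ?S ?B + e) + e" using b1 b3 a1 by linarith
      then have "c * measure ?S ?B \<le> (2 - c) * e" unfolding q_def by (simp add: algebra_simps)
      also have "\<dots> \<le> 2 * e" using c e by simp
      finally show ?thesis .
    qed
    have B0: "measure ?S ?B = 0"
    proof (rule ccontr)
      assume "measure ?S ?B \<noteq> 0"
      then have pos: "measure ?S ?B > 0" using measure_nonneg[of ?S ?B] by linarith
      have "c * measure ?S ?B \<le> 2 * (c * measure ?S ?B / 4)"
        using key[of "c * measure ?S ?B / 4"] pos c by simp
      then show False using pos c by (simp add: field_simps)
    qed
    have "measure ?S ?B = 1 - measure ?S (?E x0)"
      using Es[OF x0] by (rule S.prob_compl)
    then show "measure ?S (?E x0) = 1" using B0 by simp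
  qed
qed

end
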